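(* A quadruple of points of the quaternionic projective line $\mathbb{P}^1(\mathbb{H})$ is semi-stable if and only if no point is repeated more than twice.
   Context: $\mathbb{H}$ denotes Hamilton's quaternions (generators $i,j,k$), $\mathbb{P}^1(\mathbb{H})$ the set of rank-one right $\mathbb{H}$-submodules of $\mathbb{H}^2$. Let $\tau(x_1,x_2,x_3,x_4)=(-\bar x_2,\bar x_1,-\bar x_4,\bar x_3)$ on $\mathbb{C}^4$. Points of $\mathbb{P}^1(\mathbb{H})$ are identified with complex planes of $\mathbb{C}^4$ of the form $\langle x,\tau(x)\rangle$, $x\ne0$, the plane $\langle x,\tau(x)\rangle$ corresponding to the right $\mathbb{H}$-module generated by $(x_1+jx_2,\,x_3+jx_4)$. A quadruple of points of $\mathbb{P}^1(\mathbb{H})$ is semi-stable if the corresponding quadruple of complex planes is semi-stable for the diagonal action of $\mathrm{SL}_4(\mathbb{C})$ on $\mathrm{Gr}(2,4)^4$ with the Plücker linearization, i.e. some $\mathrm{SL}_4(\mathbb{C})$-invariant section of a positive power of $\bigotimes_i\mathrm{pr}_i^*\mathcal{O}(1)$ does not vanish. *)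

theory Defs
  imports "HOL-Analysis.Analysis"
begin

inductive poly_fun :: "(('v \<Rightarrow> complex) \<Rightarrow> complex) \<Rightarrow> bool" where
  pf_const: "poly_fun (\<lambda>z. c)"
| pf_var: "poly_fun (\<lambda>z. z i)"
| pf_add: "poly_fun f \<Longrightarrow> poly_fun g \<Longrightarrow> poly_fun (\<lambda>z. f z + g z)"
| pf_mult: "poly_fun f \<Longrightarrow> poly_fun g \<Longrightarrow> poly_fun (\<lambda>z. f z * g z)"

text \<open>Pluecker coordinates of the plane spanned by u and v (all 16 antisymmetric
  coordinates u_i v_j - u_j v_i, i.e. the 2x2 minors).\<close>
definition pluecker :: "complex^4 \<Rightarrow> complex^4 \<Rightarrow> 4 \<Rightarrow> 4 \<Rightarrow> complex" where
  "pluecker u v i j = u$i * v$j - u$j * v$i"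

definition pluecker4 :: "(4 \<Rightarrow> complex^4) \<Rightarrow> (4 \<Rightarrow> complex^4) \<Rightarrow> (4 \<times> 4 \<times> 4 \<Rightarrow> complex)" where
  "pluecker4 u v = (\<lambda>(k,i,j). pluecker (u k) (v k) i j)"

text \<open>An SL_4(C)-invariant section of O(d,d,d,d) on Gr(2,4)^4 (Pluecker linearization),
  represented by a polynomial in the Pluecker coordinates that is multihomogeneous of
  degree d in each factor and invariant on the affine cone.\<close>
definition invariant_section :: "nat \<Rightarrow> ((4 \<times> 4 \<times> 4 \<Rightarrow> complex) \<Rightarrow> complex) \<Rightarrow> bool" where
  "invariant_section d F \<longleftrightarrow>
     poly_fun F \<and>
     (\<forall>t :: 4 \<Rightarrow> complex. \<forall>z. F (\<lambda>(k,i,j). t k * z (k,i,j)) = (\<Prod>k\<in>UNIV. t k ^ d) * F z) \<and>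
     (\<forall>g :: complex^4^4. det g = 1 \<longrightarrow> (\<forall>u v.
        F (pluecker4 (\<lambda>k. g *v u k) (\<lambda>k. g *v v k)) = F (pluecker4 u v)))"

definition semistable_planes :: "(4 \<Rightarrow> complex^4) \<Rightarrow> (4 \<Rightarrow> complex^4) \<Rightarrow> bool" where
  "semistable_planes u v \<longleftrightarrow>
     (\<exists>d>0. \<exists>F. invariant_section d F \<and> F (pluecker4 u v) \<noteq> 0)"

definition tau :: "complex^4 \<Rightarrow> complex^4" where
  "tau x = vector [- cnj (x$2), cnj (x$1), - cnj (x$4), cnj (x$3)]"

text \<open>The point of P^1(H) determined by x, as the complex plane span(x, tau x).\<close>
definition qpoint :: "complex^4 \<Rightarrow> (complex^4) set" where
  "qpoint x = {a *s x + b *s tau x | a b. True}"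

definition q_semistable :: "(4 \<Rightarrow> complex^4) \<Rightarrow> bool" where
  "q_semistable x \<longleftrightarrow> semistable_planes x (\<lambda>k. tau (x k))"

end

theory Submission
  imports Defs
begin
lemma det_4: "det (A::'a::comm_ring_1^4^4) = A$1$1 * A$2$2 * A$3$3 * A$4$4 - A$1$1 * A$2$2 * A$3$4 * A$4$3 - A$1$1 * A$2$3 * A$3$2 * A$4$4 + A$1$1 * A$2$3 * A$3$4 * A$4$2 + A$1$1 * A$2$4 * A$3$2 * A$4$3 - A$1$1 * A$2$4 * A$3$3 * A$4$2 - A$1$2 * A$2$1 * A$3$3 * A$4$4 + A$1$2 * A$2$1 * A$3$4 * A$4$3 + A$1$2 * A$2$3 * A$3$1 * A$4$4 - A$1$2 * A$2$3 * A$3$4 * A$4$1 - A$1$2 * A$2$4 * A$3$1 * A$4$3 + A$1$2 * A$2$4 * A$3$3 * A$4$1 + A$1$3 * A$2$1 * A$3$2 * A$4$4 - A$1$3 * A$2$1 * A$3$4 * A$4$2 - A$1$3 * A$2$2 * A$3$1 * A$4$4 + A$1$3 * A$2$2 * A$3$4 * A$4$1 + A$1$3 * A$2$4 * A$3$1 * A$4$2 - A$1$3 * A$2$4 * A$3$2 * A$4$1 - A$1$4 * A$2$1 * A$3$2 * A$4$3 + A$1$4 * A$2$1 * A$3$3 * A$4$2 + A$1$4 * A$2$2 * A$3$1 * A$4$3 - A$1$4 * A$2$2 * A$3$3 * A$4$1 - A$1$4 * A$2$3 * A$3$1 * A$4$2 + A$1$4 * A$2$3 * A$3$2 * A$4$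1"
proof -
  have f1: "finite {2::4, 3, 4}" "1 \<notin> {2::4, 3, 4}" by auto
  have f2: "finite {3::4, 4}" "2 \<notin> {3::4, 4}" by auto
  have f3: "finite {4::4}" "3 \<notin> {4::4}" by auto
  show ?thesis
    unfolding det_def UNIV_4
    unfolding sum_over_permutations_insert[OF f1]
    unfolding sum_over_permutations_insert[OF f2]
    unfolding sum_over_permutations_insert[OF f3]
    unfolding permutes_sing
    by (simp add: sign_swap_id permutation_swap_id permutation_compose sign_compose sign_id swap_id_eq algebra_simps)
qed

lemma vec4_1 [simp]: "(vector [a,b,c,d] :: ('a::zero)^4) $ 1 = a"
  and vec4_2 [simp]: "(vector [a,b,c,d] :: ('a::zero)^4) $ 2 = b"
  and vec4_3 [simp]: "(vector [a,b,c,d] :: ('a::zero)^4) $ 3 = c"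
  and vec4_4 [simp]: "(vector [a,b,c,d] :: ('a::zero)^4) $ 4 = d"
  unfolding vector_def by simp_all

lemma tau_comp [simp]:
  "tau x $ 1 = - cnj (x$2)" "tau x $ 2 = cnj (x$1)" "tau x $ 3 = - cnj (x$4)" "tau x $ 4 = cnj (x$3)"
  unfolding tau_def by simp_all

lemma vec4_eq: "(u::'a^4) = v \<longleftrightarrow> u$1 = v$1 \<and> u$2 = v$2 \<and> u$3 = v$3 \<and> u$4 = v$4"
  by (auto simp: vec_eq_iff forall_4)

lemma tau_tau: "tau (tau x) = - x"
  by (simp add: vec4_eq)

lemma tau_lin: "tau (a *s x + b *s y) = cnj a *s tau x + cnj b *s tau y"
  by (simp add: vec4_eq)

definition cols :: "complex^4 \<Rightarrow> complex^4 \<Rightarrow> complex^4 \<Rightarrow> complex^4 \<Rightarrow> complex^4^4" where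
  "cols a b c d = (\<chi> i j. if j = 1 then a$i else if j = 2 then b$i else if j = 3 then c$i else d$i)"

lemma cols_comp [simp]: "cols a b c d $ i $ 1 = a$i" "cols a b c d $ i $ 2 = b$i"
   "cols a b c d $ i $ 3 = c$i" "cols a b c d $ i $ 4 = d$i"
  unfolding cols_def by simp_all

definition bil :: "(4 \<times> 4 \<times> 4 \<Rightarrow> complex) \<Rightarrow> 4 \<Rightarrow> 4 \<Rightarrow> complex" where
  "bil z k l = z(k,1,2)*z(l,3,4) - z(k,1,3)*z(l,2,4) + z(k,1,4)*z(l,2,3)
     + z(k,2,3)*z(l,1,4) - z(k,2,4)*z(l,1,3) + z(k,3,4)*z(l,1,2)"

lemma bil_det: "bil (pluecker4 u v) k l = det (cols (u k) (v k) (u l) (v l))"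
  unfolding bil_def pluecker4_def pluecker_def det_4 by (simp add: algebra_simps)

lemma cols_mult: "cols (g *v a) (g *v b) (g *v c) (g *v d) = g ** cols a b c d"
  by (simp add: vec_eq_iff matrix_matrix_mult_def matrix_vector_mult_def cols_def)

definition D :: "complex^4 \<Rightarrow> complex^4 \<Rightarrow> complex" where
  "D x y = det (cols x (tau x) y (tau y))"

lemma D_sym: "D x y = D y x"
  unfolding D_def det_4 by (simp add: algebra_simps)

definition herm :: "complex^4 \<Rightarrow> complex^4 \<Rightarrow> complex" where
  "herm a b = a$1 * cnj (b$1) + a$2 * cnj (b$2) + a$3 * cnj (b$3) + a$4 * cnj (b$4)"

lemma D_formula: "herm x x * D x y = herm
   (herm x x *s y - herm y x *s x - herm y (tau x) *s tau x)
   (herm x x *s y - herm y x *s x - herm y (tau x) *s tau x)"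
  unfolding D_def det_4 herm_def by (simp add: algebra_simps)


lemma herm_self: "herm z z = of_real ((cmod (z$1))^2 + (cmod (z$2))^2 + (cmod (z$3))^2 + (cmod (z$4))^2)"
  unfolding herm_def of_real_add complex_norm_square ..

lemma herm_zero: "herm z z = 0 \<Longrightarrow> z = 0"
proof -
  assume "herm z z = 0"
  then have h: "(cmod (z$1))^2 + (cmod (z$2))^2 + (cmod (z$3))^2 + (cmod (z$4))^2 = 0"
    unfolding herm_self of_real_eq_0_iff .
  have "(cmod (z$1))^2 = 0 \<and> (cmod (z$2))^2 = 0 \<and> (cmod (z$3))^2 = 0 \<and> (cmod (z$4))^2 = 0"
    using h by (smt (verit) zero_le_power2)
  then show "z = 0" by (simp add: vec4_eq)
qed

lemma herm_nz: "z \<noteq> 0 \<Longrightarrow> herm z z \<noteq> 0"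
  using herm_zero by blast

lemma q_self: "x \<in> qpoint x" "tau x \<in> qpoint x"
proof -
  have "x = 1 *s x + 0 *s tau x" "tau x = 0 *s x + 1 *s tau x" by (simp_all add: vec4_eq)
  then show "x \<in> qpoint x" "tau x \<in> qpoint x" unfolding qpoint_def by blast+
qed

lemma q_sub: "y \<in> qpoint x \<Longrightarrow> qpoint y \<subseteq> qpoint x"
proof
  fix w assume "y \<in> qpoint x" "w \<in> qpoint y"
  then obtain a b c d where y: "y = a *s x + b *s tau x" and w: "w = c *s y + d *s tau y"
    unfolding qpoint_def by blast
  have "tau y = cnj a *s tau x + cnj b *s tau (tau x)" using y tau_lin by simp
  then have ty: "tau y = (- cnj b) *s x + cnj a *s tau x" by (simp add: tau_tau vec4_eq)
  have "w = (c*a - d * cnj b) *s x + (c * b + d * cnj a) *s tau x"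
    unfolding w ty y by (simp add: vec4_eq algebra_simps)
  then show "w \<in> qpoint x" unfolding qpoint_def by blast
qed

lemma D_zero_in: assumes "x \<noteq> 0" "D x y = 0" shows "y \<in> qpoint x"
proof -
  define N where "N = herm x x"
  have N: "N \<noteq> 0" using herm_nz assms(1) N_def by simp
  define z where "z = herm x x *s y - herm y x *s x - herm y (tau x) *s tau x"
  have "herm z z = 0" using D_formula[of x y] assms(2) z_def by simp
  then have "z = 0" by (rule herm_zero)
  then have "N *s y = herm y x *s x + herm y (tau x) *s tau x"
    unfolding z_def N_def by (simp add: vec4_eq algebra_simps)
  then have "y = (herm y x / N) *s x + (herm y (tau x) / N) *s tau x"
    using N by (simp add: vec4_eq field_simps)
  then show ?thesis unfolding qpoint_def by blast
qed

lemma D_zero_eq: assumes "x \<noteq> 0" "y \<noteq> 0" "D x y = 0" shows "qpoint x = qpoint y"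
  using q_sub[OF D_zero_in[OF assms(1,3)]] q_sub[OF D_zero_in[OF assms(2)]] assms(3) D_sym
  by (metis subset_antisym)

lemma pf_sub: "poly_fun f \<Longrightarrow> poly_fun g \<Longrightarrow> poly_fun (\<lambda>z. f z - g z)"
proof -
  assume "poly_fun f" "poly_fun g"
  then have "poly_fun (\<lambda>z. f z + (\<lambda>z. -1) z * g z)"
    by (intro pf_add pf_mult pf_const)
  then show ?thesis by simp
qed

lemma pf_bil: "poly_fun (\<lambda>z. bil z k l)"
  unfolding bil_def by (intro pf_add pf_sub pf_mult pf_var)

lemma UNIV_distinct: assumes "distinct [a,b,c,d::4]" shows "UNIV = {a,b,c,d}"
proof -
  have "card {a,b,c,d} = 4" using assms by simp
  moreover have "card (UNIV :: 4 set) = 4" by simp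
  ultimately show ?thesis by (metis card_subset_eq finite subset_UNIV)
qed

lemma match_semistable:
  assumes dist: "distinct [a,b,c,d::4]" and n1: "bil (pluecker4 u v) a b \<noteq> 0"
    and n2: "bil (pluecker4 u v) c d \<noteq> 0"
  shows "semistable_planes u v"
proof -
  define F where "F = (\<lambda>z. bil z a b * bil z c d)"
  have pf: "poly_fun F" unfolding F_def by (intro pf_mult pf_bil)
  have hom: "F (\<lambda>(k,i,j). t k * z (k,i,j)) = (\<Prod>k\<in>UNIV. t k ^ 1) * F z" for t :: "4 \<Rightarrow> complex" and z
  proof -
    have "(\<Prod>k\<in>UNIV. t k ^ 1) = t a * t b * t c * t d"
      unfolding UNIV_distinct[OF dist] using dist by (simp add: algebra_simps)
    moreover have "bil (\<lambda>(k,i,j). t k * z (k,i,j)) k l = t k * t l * bil z k l" for k l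
      unfolding bil_def by (simp add: algebra_simps)
    ultimately show ?thesis unfolding F_def by (simp add: algebra_simps)
  qed
  have inv: "F (pluecker4 (\<lambda>k. g *v u k) (\<lambda>k. g *v v k)) = F (pluecker4 u v)"
    if "det g = 1" for g :: "complex^4^4" and u v
    unfolding F_def bil_det cols_mult det_mul using that by simp
  have "invariant_section 1 F"
    unfolding invariant_section_def using pf hom inv by blast
  moreover have "F (pluecker4 u v) \<noteq> 0" using n1 n2 F_def by simp
  ultimately show ?thesis unfolding semistable_planes_def by blast
qed


lemma D_e1: "D w (axis 1 1) = w$3 * cnj (w$3) + w$4 * cnj (w$4)"
  unfolding D_def det_4 by (simp add: axis_def algebra_simps)

lemma D_e3: "D w (axis 3 1) = w$1 * cnj (w$1) + w$2 * cnj (w$2)"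
  unfolding D_def det_4 by (simp add: axis_def algebra_simps)

lemma exists_y: assumes "w \<noteq> 0" shows "\<exists>y. D w y \<noteq> 0"
proof (rule ccontr)
  assume "\<not> ?thesis"
  then have "D w (axis 1 1) + D w (axis 3 1) = 0" by simp
  then have "herm w w = 0" unfolding D_e1 D_e3 herm_def by (simp add: algebra_simps)
  then show False using herm_nz assms by blast
qed

lemma mv_lin: "(A::complex^4^4) *v (a *s u + b *s v) = a *s (A *v u) + b *s (A *v v)"
  by (simp add: vec4_eq matrix_vector_mult_def sum_4 algebra_simps)

lemma mv_smult: "(A::complex^4^4) *v (a *s u) = a *s (A *v u)"
  by (simp add: vec4_eq matrix_vector_mult_def sum_4 algebra_simps)

definition dg :: "complex \<Rightarrow> complex \<Rightarrow> complex^4^4" where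
  "dg p q = (\<chi> i j. if i = j then (if i = 1 \<or> i = 2 then p else q) else 0)"

lemma det_dg: "det (dg p q) = p * p * q * q"
  unfolding det_4 dg_def by simp

lemma dg_mv: "dg p q *v v = vector [p * v$1, p * v$2, q * v$3, q * v$4]"
  by (simp add: vec4_eq matrix_vector_mult_def sum_4 dg_def)

lemma cols_e1: "cols a b c d *v axis 1 1 = a" and cols_e2: "cols a b c d *v axis 2 1 = b"
  by (simp_all add: vec4_eq matrix_vector_mult_def sum_4 axis_def)

lemma pl_smult: "pluecker (c *s a) (c *s b) i j = c * c * pluecker a b i j"
  unfolding pluecker_def by (simp add: algebra_simps)

lemma poly_cont: "poly_fun F \<Longrightarrow> (\<And>v. isCont (\<lambda>s. Z s v) s0) \<Longrightarrow> isCont (\<lambda>s. F (Z s)) s0"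
proof (induction F rule: poly_fun.induct)
  case (pf_const c) then show ?case by simp
next
  case (pf_var i) then show ?case by simp
next
  case (pf_add f g) then show ?case by (simp add: continuous_add)
next
  case (pf_mult f g) then show ?case by (simp add: continuous_mult)
qed


lemma forward_main:
  assumes inv: "invariant_section d F" and d: "d > 0" and w: "w \<noteq> 0"
    and sub: "\<And>k. k \<noteq> m \<Longrightarrow> x k \<in> qpoint w \<and> tau (x k) \<in> qpoint w"
  shows "F (pluecker4 x (\<lambda>k. tau (x k))) = 0"
proof -
  have pf: "poly_fun F" and hom: "\<And>t z. F (\<lambda>(k,i,j). t k * z (k,i,j)) = (\<Prod>k\<in>UNIV. t k ^ d) * F z"
    and ginv: "\<And>g u v. det (g::complex^4^4) = 1 \<Longrightarrow>
        F (pluecker4 (\<lambda>k. g *v u k) (\<lambda>k. g *v v k)) = F (pluecker4 u v)"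
    using inv unfolding invariant_section_def by blast+
  obtain y where y: "D w y \<noteq> 0" using exists_y[OF w] by blast
  define M where "M = cols w (tau w) y (tau y)"
  have "det M \<noteq> 0" using y unfolding M_def D_def .
  then obtain Mi where Mi: "M ** Mi = mat 1" "Mi ** M = mat 1"
    unfolding invertible_det_nz[symmetric] invertible_def by blast
  have Mie1: "Mi *v w = axis 1 1"
    by (metis M_def Mi(2) cols_e1 matrix_vector_mul_assoc matrix_vector_mul_lid)
  have Mie2: "Mi *v tau w = axis 2 1"
    by (metis M_def Mi(2) cols_e2 matrix_vector_mul_assoc matrix_vector_mul_lid)
  define G where "G s u = M *v (dg s 1 *v (Mi *v u))" for s u
  define A where "A u = M *v (dg 0 1 *v (Mi *v u))" for u
  define B where "B u = M *v (dg 1 0 *v (Mi *v u))" for u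
  have GAB: "G s u = A u + s *s B u" for s u
  proof -
    have "dg s 1 *v v = 1 *s (dg 0 1 *v v) + s *s (dg 1 0 *v v)" for v
      by (simp add: dg_mv vec4_eq)
    then show ?thesis unfolding G_def A_def B_def
      using mv_lin[of M 1 "dg 0 1 *v (Mi *v u)" s "dg 1 0 *v (Mi *v u)"] by simp
  qed
  define Zf where "Zf s = pluecker4 (\<lambda>k. if k = m then A (x m) + s *s B (x m) else x k)
      (\<lambda>k. if k = m then A (tau (x m)) + s *s B (tau (x m)) else tau (x k))" for s
  define phi where "phi s = F (Zf s)" for s
  have cphi: "isCont phi 0"
    unfolding phi_def
  proof (rule poly_cont[OF pf])
    fix v :: "4 \<times> 4 \<times> 4"
    obtain k i j where v: "v = (k,i,j)" by (cases v) auto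
    show "isCont (\<lambda>s. Zf s v) 0"
      by (cases "k = m") (simp_all add: v Zf_def pluecker4_def pluecker_def)
  qed
  have key: "F (pluecker4 x (\<lambda>k. tau (x k))) = t ^ (4*d) * phi (t^2)" if t: "t \<noteq> 0" for t
  proof -
    define g where "g = M ** dg t (1/t) ** Mi"
    have detg: "det g = 1"
    proof -
      have "det g = det M * det (dg t (1/t)) * det Mi" unfolding g_def det_mul ..
      also have "\<dots> = det M * det Mi" using t by (simp add: det_dg field_simps)
      also have "\<dots> = 1" using Mi(1) by (metis det_I det_mul)
      finally show ?thesis .
    qed
    have gw: "g *v w = t *s w"
      unfolding g_def matrix_vector_mul_assoc[symmetric] Mie1
      by (simp add: dg_def axis_def M_def matrix_vector_mult_def sum_4 vec4_eq)
    have gw2: "g *v tau w = t *s tau w"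
      unfolding g_def matrix_vector_mul_assoc[symmetric] Mie2
      by (simp add: dg_def axis_def M_def matrix_vector_mult_def sum_4 vec4_eq)
    have gq: "g *v z = t *s z" if zq: "z \<in> qpoint w" for z
    proof -
      obtain a b where z: "z = a *s w + b *s tau w" using zq unfolding qpoint_def by blast
      show ?thesis unfolding z mv_lin gw gw2 by (simp add: vec4_eq algebra_simps)
    qed
    have gG: "g *v u = (1/t) *s G (t^2) u" for u
    proof -
      have "dg t (1/t) *v v = (1/t) *s (dg (t^2) 1 *v v)" for v
        using t by (simp add: dg_mv vec4_eq power2_eq_square)
      then show ?thesis unfolding g_def G_def matrix_vector_mul_assoc[symmetric] by (simp add: mv_smult)
    qed
    define c where "c k = (if k = m then 1/t^2 else t^2)" for k
    have eq: "pluecker4 (\<lambda>k. g *v x k) (\<lambda>k. g *v tau (x k)) = (\<lambda>(k,i,j). c k * Zf (t^2) (k,i,j))"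
    proof (rule ext, clarify)
      fix k i j
      show "pluecker4 (\<lambda>k. g *v x k) (\<lambda>k. g *v tau (x k)) (k,i,j) = c k * Zf (t^2) (k,i,j)"
      proof (cases "k = m")
        case True
        then show ?thesis unfolding pluecker4_def Zf_def c_def gG pl_smult GAB
          by (simp add: power2_eq_square)
      next
        case False
        then show ?thesis unfolding pluecker4_def Zf_def c_def using sub[OF False]
          by (simp add: gq pl_smult power2_eq_square)
      qed
    qed
    have pc: "(\<Prod>k\<in>UNIV. c k ^ d) = t ^ (4*d)"
    proof -
      have "(\<Prod>k\<in>UNIV. c k ^ d) = c m ^ d * (\<Prod>k\<in>UNIV - {m}. c k ^ d)"
        by (rule prod.remove) auto
      also have "(\<Prod>k\<in>UNIV - {m}. c k ^ d) = (\<Prod>k\<in>UNIV - {m}. (t^2) ^ d)"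
        by (rule prod.cong) (auto simp: c_def)
      also have "\<dots> = ((t^2)^d) ^ 3"
        by (simp add: card_Diff_singleton)
      also have "c m ^ d * ((t^2)^d) ^ 3 = t ^ (4*d)"
      proof -
        have e: "t ^ (6*d) = t^(4*d) * t^(2*d)" by (simp add: power_add[symmetric])
        have "c m ^ d * ((t^2)^d) ^ 3 = t ^ (6*d) / t ^ (2*d)"
          by (simp add: c_def power_mult[symmetric] power_divide mult.commute)
        also have "\<dots> = t ^ (4*d)" using t by (simp add: e)
        finally show ?thesis .
      qed
      finally show ?thesis .
    qed
    have "F (pluecker4 x (\<lambda>k. tau (x k))) = F (pluecker4 (\<lambda>k. g *v x k) (\<lambda>k. g *v tau (x k)))"
      using ginv[OF detg] by simp
    also have "\<dots> = t ^ (4*d) * phi (t^2)" unfolding eq hom pc phi_def ..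
    finally show ?thesis .
  qed
  have c2: "isCont (\<lambda>t. phi (t^2)) 0"
    using isCont_o2[where f="\<lambda>t::complex. t^2" and a=0 and g=phi] cphi by simp
  have ic: "isCont (\<lambda>t. t ^ (4*d) * phi (t^2)) 0"
    by (intro continuous_intros c2)
  have lim: "(\<lambda>t. t ^ (4*d) * phi (t^2)) \<midarrow>0\<rightarrow> 0"
  proof -
    have "(0::complex) ^ (4*d) = 0" using d by (simp add: zero_power)
    have "(\<lambda>t. t ^ (4*d) * phi (t^2)) \<midarrow>0\<rightarrow> 0 ^ (4*d) * phi 0" using ic unfolding isCont_def by simp
    then show ?thesis using \<open>(0::complex) ^ (4*d) = 0\<close> by simp
  qed
  have ev: "eventually (\<lambda>t. t ^ (4*d) * phi (t^2) = F (pluecker4 x (\<lambda>k. tau (x k)))) (at (0::complex))"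
    using eventually_neq_at_within[where x="0::complex" and z="0::complex" and A=UNIV]
    by (rule eventually_mono) (rule key[symmetric])
  have "(\<lambda>t::complex. F (pluecker4 x (\<lambda>k. tau (x k)))) \<midarrow>0\<rightarrow> 0"
    using Lim_transform_eventually[OF lim ev] .
  then show ?thesis by (rule LIM_const_eq)
qed



lemma comb4: fixes a b c d :: 'a
  assumes "\<not>(a=b \<and> a=c)" "\<not>(a=b \<and> a=d)" "\<not>(a=c \<and> a=d)" "\<not>(b=c \<and> b=d)"
  shows "(a\<noteq>b \<and> c\<noteq>d) \<or> (a\<noteq>c \<and> b\<noteq>d) \<or> (a\<noteq>d \<and> b\<noteq>c)"
  using assms by metis

theorem proposition5p7:
  fixes x :: "4 \<Rightarrow> complex^4"
  assumes "\<forall>k. x k \<noteq> 0"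
  shows "q_semistable x \<longleftrightarrow> (\<forall>k. card {l. qpoint (x l) = qpoint (x k)} \<le> 2)"
proof
  assume qs: "q_semistable x"
  show "\<forall>k. card {l. qpoint (x l) = qpoint (x k)} \<le> 2"
  proof (rule allI, rule ccontr)
    fix k0
    define S where "S = {l. qpoint (x l) = qpoint (x k0)}"
    assume "\<not> card {l. qpoint (x l) = qpoint (x k0)} \<le> 2"
    then have cS: "card S \<ge> 3" unfolding S_def by simp
    define R where "R = UNIV - S"
    have "card R = card (UNIV :: 4 set) - card S" unfolding R_def
      by (rule card_Diff_subset) auto
    then have cR: "card R \<le> Suc 0" using cS by simp
    obtain m where m: "\<And>k. k \<noteq> m \<Longrightarrow> k \<in> S"
    proof (cases "R = {}")
      case True then show ?thesis using that[of k0] unfolding R_def by auto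
    next
      case False
      then obtain m where "m \<in> R" by blast
      moreover have "\<forall>a\<in>R. \<forall>b\<in>R. a = b" using cR card_le_Suc0_iff_eq[of R] by simp
      ultimately show ?thesis using that[of m] unfolding R_def by blast
    qed
    have sub: "x k \<in> qpoint (x k0) \<and> tau (x k) \<in> qpoint (x k0)" if "k \<noteq> m" for k
      using m[OF that] q_self[of "x k"] unfolding S_def by simp
    obtain d F where d: "d > 0" and inv: "invariant_section d F"
      and nz: "F (pluecker4 x (\<lambda>k. tau (x k))) \<noteq> 0"
      using qs unfolding q_semistable_def semistable_planes_def by blast
    have "F (pluecker4 x (\<lambda>k. tau (x k))) = 0"
      using forward_main[where w="x k0" and m=m and x=x, OF inv d _ sub] assms by blast
    then show False using nz by simp
  qed
next
  assume cc: "\<forall>k. card {l. qpoint (x l) = qpoint (x k)} \<le> 2"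
  define Q where "Q l = qpoint (x l)" for l
  define P where "P = pluecker4 x (\<lambda>k. tau (x k))"
  have bnz: "bil P k l \<noteq> 0" if "Q k \<noteq> Q l" for k l
  proof
    assume "bil P k l = 0"
    then have "D (x k) (x l) = 0" unfolding P_def bil_det D_def .
    then have "Q k = Q l" unfolding Q_def using D_zero_eq assms by blast
    then show False using that by simp
  qed
  have three: "\<not> (Q i = Q j \<and> Q i = Q l)" if "distinct [i,j,l]" for i j l
  proof
    assume e: "Q i = Q j \<and> Q i = Q l"
    have "{i,j,l} \<subseteq> {m. qpoint (x m) = qpoint (x i)}" using e unfolding Q_def by auto
    then have "card {i,j,l} \<le> card {m. qpoint (x m) = qpoint (x i)}" by (rule card_mono[OF finite])
    moreover have "card {i,j,l} = 3" using that by simp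
    ultimately show False using cc by (metis not_less_eq_eq numeral_3_eq_3 numeral_2_eq_2)
  qed
  have "(Q 1 \<noteq> Q 2 \<and> Q 3 \<noteq> Q 4) \<or> (Q 1 \<noteq> Q 3 \<and> Q 2 \<noteq> Q 4) \<or> (Q 1 \<noteq> Q 4 \<and> Q 2 \<noteq> Q 3)"
    by (rule comb4) (rule three; simp)+
  then show "q_semistable x"
    unfolding q_semistable_def
  proof (elim disjE conjE)
    assume "Q 1 \<noteq> Q 2" "Q 3 \<noteq> Q 4"
    then show "semistable_planes x (\<lambda>k. tau (x k))"
      using match_semistable[of 1 2 3 4] bnz unfolding P_def by simp
  next
    assume "Q 1 \<noteq> Q 3" "Q 2 \<noteq> Q 4"
    then show "semistable_planes x (\<lambda>k. tau (x k))"
      using match_semistable[of 1 3 2 4] bnz unfolding P_def by simp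
  next
    assume "Q 1 \<noteq> Q 4" "Q 2 \<noteq> Q 3"
    then show "semistable_planes x (\<lambda>k. tau (x k))"
      using match_semistable[of 1 4 2 3] bnz unfolding P_def by simp
  qed
qed

end
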